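(* Let $X$ and $Y$ be slices that are not jointly spacelike (i.e. $X\cup Y$ is not spacelike). Then the presheaf $(X\vee Y)(-):\mathsf{Slice}^{op}\to\mathsf{Set}$ is not representable.
   Context: Fix a connected, time-orientable Lorentzian manifold $\mathcal{M}$ with a fixed time-orientation (no further causality assumptions). A causal curve is an equivalence class, up to monotone reparametrisation, of smooth regular paths $\mu:\iota\to\mathcal{M}$ ($\iota\subseteq\mathbb{R}$ an interval) whose tangent is everywhere timelike or null; it is future-directed if the tangent is everywhere future-directed. Write $x\prec y$ if $x=y$ or there is a future-directed causal curve from $x$ to $y$. A region $A\subseteq\mathcal{M}$ is spacelike if no two distinct points $x,y\in A$ satisfy $x\prec y$. A slice is a closed spacelike subset of $\mathcal{M}$; slices $X,Y$ are jointly spacelike if $X\cup Y$ is spacelike. For regions $A,B$, $\mathcal{C}[A,B]$ is the set of future-directed causal curves passing through $A$ and then $B$: for a representative path $\mu:\iota\to\mathcal{M}$, there exists $q\in\iota$ with $\mu(q)\in B$, and for every such $q$ there exists $p\le q$ with $\mu(p)\in A$. The category $\mathsf{Slice}$ has slices as objects, $\mathsf{Slice}(X,Y)=\mathcal{P}(\mathcal{C}[X,Y])$ (the powerset), composition $T\circ S:=T\cap S$, identities $1_X=\mathcal{C}[X,X]$. For slices $X,Y$, $(X\vee Y)(-)$ is the presheaf with $(X\vee Y)(Z):=\mathcal{P}(\mathcal{C}[Z,X]\cup\mathcal{C}[Z,Y])$ and $(X\vee Y)(U:Z'\to Z):C\mapsto C\cap U$. *)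

theory Defs
  imports "HOL-Analysis.Analysis"
begin

fun lz_Ck :: "nat \<Rightarrow> 'a::real_normed_vector set \<Rightarrow> ('a \<Rightarrow> 'b::real_normed_vector) \<Rightarrow> bool" where
  "lz_Ck 0 S f = continuous_on S f"
| "lz_Ck (Suc k) S f =
     ((\<forall>x\<in>S. f differentiable (at x)) \<and>
      (\<forall>v. lz_Ck k S (\<lambda>x. frechet_derivative f (at x) v)))"

definition lz_smooth_on :: "'a::real_normed_vector set \<Rightarrow> ('a \<Rightarrow> 'b::real_normed_vector) \<Rightarrow> bool" where
  "lz_smooth_on S f \<longleftrightarrow> (\<forall>k. lz_Ck k S f)"

text \<open>C^k curves on a subset of the real line (one-sided derivatives at endpoints).\<close>
fun lz_curve_Ck :: "nat \<Rightarrow> real set \<Rightarrow> (real \<Rightarrow> 'b::real_normed_vector) \<Rightarrow> bool" where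
  "lz_curve_Ck 0 I c = continuous_on I c"
| "lz_curve_Ck (Suc k) I c =
     ((\<forall>t\<in>I. c differentiable (at t within I)) \<and>
      lz_curve_Ck k I (\<lambda>t. vector_derivative c (at t within I)))"

type_synonym ('a, 'n) chart = "'a set \<times> ('a \<Rightarrow> real^'n)"

definition smooth_atlas :: "('a::topological_space, 'n::finite) chart set \<Rightarrow> bool" where
  "smooth_atlas A \<longleftrightarrow>
     (\<Union>(fst ` A) = UNIV) \<and>
     (\<forall>(U, \<phi>)\<in>A. open U \<and> open (\<phi> ` U) \<and> (\<exists>\<psi>. homeomorphism U (\<phi> ` U) \<phi> \<psi>)) \<and>
     (\<forall>(U, \<phi>)\<in>A. \<forall>(V, \<psi>)\<in>A. lz_smooth_on (\<phi> ` (U \<inter> V)) (\<psi> \<circ> inv_into U \<phi>))"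

definition transition :: "('a, 'n::finite) chart \<Rightarrow> ('a, 'n) chart \<Rightarrow> real^'n \<Rightarrow> real^'n" where
  "transition c d = snd d \<circ> inv_into (fst c) (snd c)"

definition lorentz_signature :: "real^'n^'n \<Rightarrow> bool" where
  "lorentz_signature M \<longleftrightarrow> transpose M = M \<and>
     (\<exists>e :: 'n \<Rightarrow> real^'n. \<exists>i0. inj e \<and> independent (range e) \<and>
        (\<forall>i j. e i \<bullet> (M *v e j) = (if i = j then (if i = i0 then -1 else 1) else 0)))"

text \<open>A connected, time-oriented Lorentzian manifold: atlas A, metric components G
  (per chart, as a matrix-valued function of coordinates), and a continuous timelike
  vector field T (per chart, in coordinates) fixing the time-orientation.\<close>
definition time_oriented_lorentzian ::
  "('a::{t2_space, second_countable_topology}, 'n::finite) chart set \<Rightarrow>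
   (('a, 'n) chart \<Rightarrow> real^'n \<Rightarrow> real^'n^'n) \<Rightarrow>
   (('a, 'n) chart \<Rightarrow> real^'n \<Rightarrow> real^'n) \<Rightarrow> bool" where
  "time_oriented_lorentzian A G T \<longleftrightarrow>
     CARD('n) \<ge> 2 \<and> connected (UNIV :: 'a set) \<and> smooth_atlas A \<and>
     (\<forall>c\<in>A. \<forall>i j. lz_smooth_on (snd c ` fst c) (\<lambda>x. G c x $ i $ j)) \<and>
     (\<forall>c\<in>A. \<forall>x\<in>snd c ` fst c. lorentz_signature (G c x)) \<and>
     (\<forall>c\<in>A. \<forall>d\<in>A. \<forall>p\<in>fst c \<inter> fst d. \<forall>u v.
        frechet_derivative (transition c d) (at (snd c p)) u \<bullet>
          (G d (snd d p) *v frechet_derivative (transition c d) (at (snd c p)) v)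
        = u \<bullet> (G c (snd c p) *v v)) \<and>
     (\<forall>c\<in>A. continuous_on (snd c ` fst c) (T c)) \<and>
     (\<forall>c\<in>A. \<forall>x\<in>snd c ` fst c. T c x \<bullet> (G c x *v T c x) < 0) \<and>
     (\<forall>c\<in>A. \<forall>d\<in>A. \<forall>p\<in>fst c \<inter> fst d.
        frechet_derivative (transition c d) (at (snd c p)) (T c (snd c p)) = T d (snd d p))"

text \<open>A parametrised path: its domain interval together with the map.\<close>
type_synonym 'a cpath = "real set \<times> (real \<Rightarrow> 'a)"

definition causal_path ::
  "('a::topological_space, 'n::finite) chart set \<Rightarrow> (('a, 'n) chart \<Rightarrow> real^'n \<Rightarrow> real^'n^'n) \<Rightarrow>
   'a cpath \<Rightarrow> bool" where
  "causal_path A G \<mu> \<longleftrightarrow>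
     is_interval (fst \<mu>) \<and> (\<exists>a\<in>fst \<mu>. \<exists>b\<in>fst \<mu>. a < b) \<and>
     continuous_on (fst \<mu>) (snd \<mu>) \<and>
     (\<forall>c\<in>A. \<forall>k. lz_curve_Ck k {t\<in>fst \<mu>. snd \<mu> t \<in> fst c} (snd c \<circ> snd \<mu>)) \<and>
     (\<forall>c\<in>A. \<forall>t\<in>fst \<mu>. snd \<mu> t \<in> fst c \<longrightarrow>
        (let v = vector_derivative (snd c \<circ> snd \<mu>) (at t within {s\<in>fst \<mu>. snd \<mu> s \<in> fst c});
             x = snd c (snd \<mu> t)
         in v \<noteq> 0 \<and> v \<bullet> (G c x *v v) \<le> 0))"

text \<open>Future-directed: tangent in the same cone as the time-orientation field T.\<close>
definition future_directed ::
  "('a::topological_space, 'n::finite) chart set \<Rightarrow> (('a, 'n) chart \<Rightarrow> real^'n \<Rightarrow> real^'n^'n) \<Rightarrow>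
   (('a, 'n) chart \<Rightarrow> real^'n \<Rightarrow> real^'n) \<Rightarrow> 'a cpath \<Rightarrow> bool" where
  "future_directed A G T \<mu> \<longleftrightarrow>
     (\<forall>c\<in>A. \<forall>t\<in>fst \<mu>. snd \<mu> t \<in> fst c \<longrightarrow>
        (let v = vector_derivative (snd c \<circ> snd \<mu>) (at t within {s\<in>fst \<mu>. snd \<mu> s \<in> fst c});
             x = snd c (snd \<mu> t)
         in T c x \<bullet> (G c x *v v) < 0))"

definition reparam :: "'a cpath \<Rightarrow> 'a cpath \<Rightarrow> bool" where
  "reparam \<nu> \<mu> \<longleftrightarrow> (\<exists>h. bij_betw h (fst \<nu>) (fst \<mu>) \<and> strict_mono_on (fst \<nu>) h \<and>
                        (\<forall>t\<in>fst \<nu>. snd \<nu> t = snd \<mu> (h t)))"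

definition causal_curve ::
  "('a::topological_space, 'n::finite) chart set \<Rightarrow> (('a, 'n) chart \<Rightarrow> real^'n \<Rightarrow> real^'n^'n) \<Rightarrow>
   'a cpath set \<Rightarrow> bool" where
  "causal_curve A G C \<longleftrightarrow> (\<exists>\<mu>. causal_path A G \<mu> \<and> C = {\<nu>. causal_path A G \<nu> \<and> reparam \<nu> \<mu>})"

definition fd_causal_curve ::
  "('a::topological_space, 'n::finite) chart set \<Rightarrow> (('a, 'n) chart \<Rightarrow> real^'n \<Rightarrow> real^'n^'n) \<Rightarrow>
   (('a, 'n) chart \<Rightarrow> real^'n \<Rightarrow> real^'n) \<Rightarrow> 'a cpath set \<Rightarrow> bool" where
  "fd_causal_curve A G T C \<longleftrightarrow> causal_curve A G C \<and> (\<forall>\<mu>\<in>C. future_directed A G T \<mu>)"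

definition causal_prec ::
  "('a::topological_space, 'n::finite) chart set \<Rightarrow> (('a, 'n) chart \<Rightarrow> real^'n \<Rightarrow> real^'n^'n) \<Rightarrow>
   (('a, 'n) chart \<Rightarrow> real^'n \<Rightarrow> real^'n) \<Rightarrow> 'a \<Rightarrow> 'a \<Rightarrow> bool" where
  "causal_prec A G T x y \<longleftrightarrow> x = y \<or>
     (\<exists>C. fd_causal_curve A G T C \<and>
        (\<exists>\<mu>\<in>C. \<exists>a\<in>fst \<mu>. \<exists>b\<in>fst \<mu>. a \<le> b \<and> snd \<mu> a = x \<and> snd \<mu> b = y))"

definition spacelike ::
  "('a::topological_space, 'n::finite) chart set \<Rightarrow> (('a, 'n) chart \<Rightarrow> real^'n \<Rightarrow> real^'n^'n) \<Rightarrow>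
   (('a, 'n) chart \<Rightarrow> real^'n \<Rightarrow> real^'n) \<Rightarrow> 'a set \<Rightarrow> bool" where
  "spacelike A G T S \<longleftrightarrow> (\<forall>x\<in>S. \<forall>y\<in>S. x \<noteq> y \<longrightarrow> \<not> causal_prec A G T x y)"

definition slice ::
  "('a::topological_space, 'n::finite) chart set \<Rightarrow> (('a, 'n) chart \<Rightarrow> real^'n \<Rightarrow> real^'n^'n) \<Rightarrow>
   (('a, 'n) chart \<Rightarrow> real^'n \<Rightarrow> real^'n) \<Rightarrow> 'a set \<Rightarrow> bool" where
  "slice A G T S \<longleftrightarrow> closed S \<and> spacelike A G T S"

definition passes_then :: "'a cpath \<Rightarrow> 'a set \<Rightarrow> 'a set \<Rightarrow> bool" where
  "passes_then \<mu> S1 S2 \<longleftrightarrow>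
     (\<exists>q\<in>fst \<mu>. snd \<mu> q \<in> S2) \<and>
     (\<forall>q\<in>fst \<mu>. snd \<mu> q \<in> S2 \<longrightarrow> (\<exists>p\<in>fst \<mu>. p \<le> q \<and> snd \<mu> p \<in> S1))"

definition curves_through ::
  "('a::topological_space, 'n::finite) chart set \<Rightarrow> (('a, 'n) chart \<Rightarrow> real^'n \<Rightarrow> real^'n^'n) \<Rightarrow>
   (('a, 'n) chart \<Rightarrow> real^'n \<Rightarrow> real^'n) \<Rightarrow> 'a set \<Rightarrow> 'a set \<Rightarrow> 'a cpath set set" where
  "curves_through A G T S1 S2 =
     {C. fd_causal_curve A G T C \<and> (\<exists>\<mu>\<in>C. passes_then \<mu> S1 S2)}"

definition slice_hom ::
  "('a::topological_space, 'n::finite) chart set \<Rightarrow> (('a, 'n) chart \<Rightarrow> real^'n \<Rightarrow> real^'n^'n) \<Rightarrow>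
   (('a, 'n) chart \<Rightarrow> real^'n \<Rightarrow> real^'n) \<Rightarrow> 'a set \<Rightarrow> 'a set \<Rightarrow> 'a cpath set set set" where
  "slice_hom A G T X Y = Pow (curves_through A G T X Y)"

definition slice_comp :: "'a cpath set set \<Rightarrow> 'a cpath set set \<Rightarrow> 'a cpath set set" where
  "slice_comp S2 S1 = S2 \<inter> S1"

definition join_obj ::
  "('a::topological_space, 'n::finite) chart set \<Rightarrow> (('a, 'n) chart \<Rightarrow> real^'n \<Rightarrow> real^'n^'n) \<Rightarrow>
   (('a, 'n) chart \<Rightarrow> real^'n \<Rightarrow> real^'n) \<Rightarrow> 'a set \<Rightarrow> 'a set \<Rightarrow> 'a set \<Rightarrow> 'a cpath set set set" where
  "join_obj A G T X Y Z = Pow (curves_through A G T Z X \<union> curves_through A G T Z Y)"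

definition join_arr :: "'a cpath set set \<Rightarrow> 'a cpath set set \<Rightarrow> 'a cpath set set" where
  "join_arr U C = C \<inter> U"

text \<open>Representability: a slice W and a natural isomorphism Slice(-,W) \<cong> (X \<or> Y)(-),
  where Slice(-,W)(U) S = S o U.\<close>
definition join_representable ::
  "('a::topological_space, 'n::finite) chart set \<Rightarrow> (('a, 'n) chart \<Rightarrow> real^'n \<Rightarrow> real^'n^'n) \<Rightarrow>
   (('a, 'n) chart \<Rightarrow> real^'n \<Rightarrow> real^'n) \<Rightarrow> 'a set \<Rightarrow> 'a set \<Rightarrow> bool" where
  "join_representable A G T X Y \<longleftrightarrow>
     (\<exists>W \<alpha>. slice A G T W \<and>
        (\<forall>Z. slice A G T Z \<longrightarrow> bij_betw (\<alpha> Z) (slice_hom A G T Z W) (join_obj A G T X Y Z)) \<and>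
        (\<forall>Z Z' U S. slice A G T Z \<longrightarrow> slice A G T Z' \<longrightarrow>
            U \<in> slice_hom A G T Z' Z \<longrightarrow> S \<in> slice_hom A G T Z W \<longrightarrow>
            \<alpha> Z' (slice_comp S U) = join_arr U (\<alpha> Z S)))"

end

theory Submission
  imports Defs
begin



lemma vd_iff:
  fixes f :: "real \<Rightarrow> 'b::real_normed_vector"
  shows "(f has_vector_derivative D) (at x within S) \<longleftrightarrow>
    ((\<lambda>y. (f y - f x) /\<^sub>R (y - x)) \<longlongrightarrow> D) (at x within S)"
proof -
  have e: "norm ((f y - f x) - (y - x) *\<^sub>R D) / \<bar>y - x\<bar> = norm ((f y - f x) /\<^sub>R (y - x) - D)"
    if "y \<noteq> x" for y
  proof -
    have "(1 / (y - x)) *\<^sub>R ((f y - f x) - (y - x) *\<^sub>R D) = (f y - f x) /\<^sub>R (y - x) - D"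
      using that by (simp add: scaleR_diff_right divide_inverse)
    then have "(f y - f x) /\<^sub>R (y - x) - D = (1 / (y - x)) *\<^sub>R ((f y - f x) - (y - x) *\<^sub>R D)" by simp
    then show ?thesis by (simp add: divide_inverse mult.commute)
  qed
  have "((\<lambda>y. norm ((f y - f x) - (y - x) *\<^sub>R D) / norm (y - x)) \<longlongrightarrow> 0) (at x within S)
      = ((\<lambda>y. (f y - f x) /\<^sub>R (y - x) - D) \<longlongrightarrow> 0) (at x within S)"
  proof -
    have "((\<lambda>y. norm ((f y - f x) - (y - x) *\<^sub>R D) / norm (y - x)) \<longlongrightarrow> 0) (at x within S)
      = ((\<lambda>y. norm ((f y - f x) /\<^sub>R (y - x) - D)) \<longlongrightarrow> 0) (at x within S)"
      by (rule Lim_cong_within) (auto simp: e)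
    then show ?thesis by (simp only: tendsto_norm_zero_iff)
  qed
  then show ?thesis
    by (simp add: has_vector_derivative_def has_derivative_iff_norm bounded_linear_scaleR_left LIM_zero_iff)
qed

lemma limpt_preimage:
  fixes f :: "real \<Rightarrow> 'b::topological_space"
  assumes "is_interval I" "a \<in> I" "b \<in> I" "a < b" "continuous_on I f" "open U" "t \<in> I" "f t \<in> U"
  shows "t islimpt {s\<in>I. f s \<in> U}"
proof -
  have "openin (top_of_set I) (I \<inter> f -` U)"
    using assms by (simp add: continuous_openin_preimage_gen)
  then obtain e where e: "e > 0" "\<And>s. s \<in> I \<Longrightarrow> dist s t < e \<Longrightarrow> s \<in> I \<inter> f -` U"
    using assms(7,8) unfolding openin_euclidean_subtopology_iff by (metis IntI vimageI)
  show ?thesis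
    unfolding islimpt_approachable
  proof (intro allI impI)
    fix d :: real assume "d > 0"
    define r where "r = min d e / 2"
    have r: "r > 0" "r < d" "r < e" using \<open>d>0\<close> e by (auto simp: r_def)
    show "\<exists>x'\<in>{s \<in> I. f s \<in> U}. x' \<noteq> t \<and> dist x' t < d"
    proof (cases "t < b")
      case True
      define s where "s = min (t + r) b"
      have "s \<in> I" unfolding s_def
        by (rule mem_is_interval_1_I[of I t b]) (use assms(1,3,7) True r in auto)
      moreover have "dist s t < e" "dist s t < d" "s \<noteq> t" using True r by (auto simp: s_def dist_real_def)
      ultimately show ?thesis using e(2)[of s] by (intro bexI[of _ s]) auto
    next
      case False
      then have "a < t" using assms by simp
      define s where "s = max (t - r) a"
      have "s \<in> I" unfolding s_def
        by (rule mem_is_interval_1_I[of I a t]) (use assms(1,2,7) \<open>a<t\<close> r in auto)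
      moreover have "dist s t < e" "dist s t < d" "s \<noteq> t" using \<open>a<t\<close> r by (auto simp: s_def dist_real_def)
      ultimately show ?thesis using e(2)[of s] by (intro bexI[of _ s]) auto
    qed
  qed
qed




lemma Ck_cong: "lz_curve_Ck k S f \<Longrightarrow> (\<forall>x\<in>S. f x = g x) \<Longrightarrow> lz_curve_Ck k S g"
proof (induction k arbitrary: f g)
  case 0
  then show ?case using continuous_on_cong by fastforce
next
  case (Suc k)
  have vd: "vector_derivative f (at t within S) = vector_derivative g (at t within S)" if "t \<in> S" for t
    by (rule vector_derivative_cong_eq) (use Suc.prems(2) that in auto)
  have d: "g differentiable (at t within S)" if "t \<in> S" for t
  proof -
    have h1: "(f has_vector_derivative vector_derivative f (at t within S)) (at t within S)"
      using Suc.prems(1) that vector_derivative_works by auto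
    have "(g has_vector_derivative vector_derivative f (at t within S)) (at t within S)"
      by (rule has_vector_derivative_transform[OF that _ h1]) (use Suc.prems(2) in auto)
    then show ?thesis using differentiableI_vector by blast
  qed
  have "lz_curve_Ck k S (\<lambda>t. vector_derivative g (at t within S))"
    using Suc.IH[of "\<lambda>t. vector_derivative f (at t within S)"] Suc.prems vd by auto
  then show ?case using d by simp
qed

lemma vd_sub:
  assumes "f differentiable (at t within S)" "S' \<subseteq> S" "t islimpt S'"
  shows "vector_derivative f (at t within S') = vector_derivative f (at t within S)"
proof -
  have "(f has_vector_derivative vector_derivative f (at t within S)) (at t within S)"
    using assms(1) vector_derivative_works by auto
  then have "(f has_vector_derivative vector_derivative f (at t within S)) (at t within S')"
    using assms(2) has_vector_derivative_within_subset by blast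
  moreover have "at t within S' \<noteq> bot" using assms(3) trivial_limit_within by blast
  ultimately show ?thesis using vector_derivative_within by blast
qed

lemma Ck_subset: "lz_curve_Ck k S f \<Longrightarrow> S' \<subseteq> S \<Longrightarrow> (\<forall>t\<in>S'. t islimpt S') \<Longrightarrow> lz_curve_Ck k S' f"
proof (induction k arbitrary: f)
  case 0
  then show ?case using continuous_on_subset by auto
next
  case (Suc k)
  have d: "f differentiable (at t within S')" if "t \<in> S'" for t
  proof -
    have "f differentiable (at t within S)" using Suc.prems(1,2) that by auto
    then show ?thesis using differentiable_within_subset Suc.prems(2) by blast
  qed
  have c1: "lz_curve_Ck k S' (\<lambda>t. vector_derivative f (at t within S))"
    using Suc.IH[of "\<lambda>t. vector_derivative f (at t within S)"] Suc.prems by simp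
  have c2: "\<forall>t\<in>S'. vector_derivative f (at t within S) = vector_derivative f (at t within S')"
  proof
    fix t assume t: "t \<in> S'"
    have "f differentiable (at t within S)" using Suc.prems(1,2) t by auto
    then show "vector_derivative f (at t within S) = vector_derivative f (at t within S')"
      using vd_sub[of f t S S'] Suc.prems(2,3) t by simp
  qed
  have "lz_curve_Ck k S' (\<lambda>t. vector_derivative f (at t within S'))"
    by (rule Ck_cong[OF c1 c2])
  then show ?case using d by simp
qed




lemma sm_le:
  assumes "strict_mono_on S h" "x \<in> S" "y \<in> S" "x \<le> (y::real)" shows "(h x::real) \<le> h y"
proof (cases "x = y")
  case False
  then have "x < y" using assms(4) by simp
  then have "h x < h y" using strict_mono_onD[OF assms(1,2,3)] by blast
  then show ?thesis by simp
qed simp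

lemma sm_less_iff: "strict_mono_on S h \<Longrightarrow> x \<in> S \<Longrightarrow> y \<in> S \<Longrightarrow> ((h x::real) < h y) = (x < (y::real))"
  by (metis not_less_iff_gr_or_eq order_less_asym strict_mono_onD)

lemma right_ctrl:
  fixes h :: "real \<Rightarrow> real"
  assumes sm: "strict_mono_on S h" and im: "h ` S = J" and iv: "is_interval J" and t: "t \<in> S" and e: "e > 0"
  shows "\<exists>d>0. \<forall>x\<in>S. t \<le> x \<and> x < t + d \<longrightarrow> h x < h t + e"
proof (cases "\<exists>z\<in>S. z > t \<and> h z < h t + e")
  case True
  then obtain z where z: "z \<in> S" "z > t" "h z < h t + e" by blast
  show ?thesis
  proof (intro exI[of _ "z - t"] conjI ballI impI)
    fix x assume "x \<in> S" "t \<le> x \<and> x < t + (z - t)"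
    then have "h x < h z" using sm z by (simp add: strict_mono_onD)
    then show "h x < h t + e" using z by simp
  qed (use z in simp)
next
  case False
  have no: "\<not> (x > t)" if "x \<in> S" for x
  proof
    assume "x > t"
    then have hx: "h x > h t" using sm t that by (simp add: strict_mono_onD)
    have "h x \<ge> h t + e"
    proof (rule ccontr)
      assume "\<not> h x \<ge> h t + e"
      then have "h x < h t + e" by simp
      then show False using False that \<open>x > t\<close> by blast
    qed
    have "h t + e / 2 \<in> J"
      by (rule mem_is_interval_1_I[of J "h t" "h x"]) (use iv im t that hx \<open>h x \<ge> h t + e\<close> e in auto)
    then obtain z where z: "z \<in> S" "h z = h t + e / 2" using im by (metis imageE)
    then have "z > t" using sm_less_iff[OF sm t z(1)] e by simp
    moreover have "h t + e / 2 < h t + e" "h t - e < h t - e / 2" using e by simp_all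
    ultimately show False using False z by auto
  qed
  show ?thesis
  proof (intro exI[of _ 1] conjI ballI impI)
    fix x assume x: "x \<in> S" "t \<le> x \<and> x < t + 1"
    then have "x = t" using no[OF x(1)] by simp
    then show "h x < h t + e" using e by simp
  qed simp
qed

lemma left_ctrl:
  fixes h :: "real \<Rightarrow> real"
  assumes sm: "strict_mono_on S h" and im: "h ` S = J" and iv: "is_interval J" and t: "t \<in> S" and e: "e > 0"
  shows "\<exists>d>0. \<forall>x\<in>S. t - d < x \<and> x \<le> t \<longrightarrow> h t - e < h x"
proof (cases "\<exists>z\<in>S. z < t \<and> h t - e < h z")
  case True
  then obtain z where z: "z \<in> S" "z < t" "h t - e < h z" by blast
  show ?thesis
  proof (intro exI[of _ "t - z"] conjI ballI impI)
    fix x assume "x \<in> S" "t - (t - z) < x \<and> x \<le> t"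
    then have "h z < h x" using sm z by (simp add: strict_mono_onD)
    then show "h t - e < h x" using z by simp
  qed (use z in simp)
next
  case False
  have no: "\<not> (x < t)" if "x \<in> S" for x
  proof
    assume "x < t"
    then have hx: "h x < h t" using sm t that by (simp add: strict_mono_onD)
    have "h x \<le> h t - e"
    proof (rule ccontr)
      assume "\<not> h x \<le> h t - e"
      then have "h t - e < h x" by simp
      then show False using False that \<open>x < t\<close> by blast
    qed
    have "h t - e / 2 \<in> J"
      by (rule mem_is_interval_1_I[of J "h x" "h t"]) (use iv im t that hx \<open>h x \<le> h t - e\<close> e in auto)
    then obtain z where z: "z \<in> S" "h z = h t - e / 2" using im by (metis imageE)
    then have "z < t" using sm_less_iff[OF sm z(1) t] e by simp
    moreover have "h t + e / 2 < h t + e" "h t - e < h t - e / 2" using e by simp_all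
    ultimately show False using False z by auto
  qed
  show ?thesis
  proof (intro exI[of _ 1] conjI ballI impI)
    fix x assume x: "x \<in> S" "t - 1 < x \<and> x \<le> t"
    then have "x = t" using no[OF x(1)] by simp
    then show "h t - e < h x" using e by simp
  qed simp
qed

lemma sm_cont:
  fixes h :: "real \<Rightarrow> real"
  assumes sm: "strict_mono_on S h" and im: "h ` S = J" and iv: "is_interval J"
  shows "continuous_on S h"
  unfolding continuous_on_iff
proof (intro ballI allI impI)
  fix t e assume t: "t \<in> S" and e: "(0::real) < e"
  obtain d1 where d1: "d1 > 0" "\<forall>x\<in>S. t \<le> x \<and> x < t + d1 \<longrightarrow> h x < h t + e"
    using right_ctrl[OF sm im iv t e] by blast
  obtain d2 where d2: "d2 > 0" "\<forall>x\<in>S. t - d2 < x \<and> x \<le> t \<longrightarrow> h t - e < h x"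
    using left_ctrl[OF sm im iv t e] by blast
  show "\<exists>d>0. \<forall>x'\<in>S. dist x' t < d \<longrightarrow> dist (h x') (h t) < e"
  proof (intro exI[of _ "min d1 d2"] conjI ballI impI)
    fix x assume x: "x \<in> S" "dist x t < min d1 d2"
    show "dist (h x) (h t) < e"
    proof (cases "t \<le> x")
      case True
      then have "h t \<le> h x" using sm_le[OF sm t x(1)] by simp
      moreover have "h x < h t + e" using d1 x True by (auto simp: dist_real_def)
      ultimately show ?thesis by (simp add: dist_real_def)
    next
      case False
      then have "h x \<le> h t" using sm_le[OF sm x(1) t] by simp
      moreover have "h t - e < h x" using d2 x False by (auto simp: dist_real_def)
      ultimately show ?thesis by (simp add: dist_real_def)
    qed
  qed (use d1 d2 in auto)
qed




lemma key:
  fixes g f :: "real \<Rightarrow> 'b::real_inner"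
  assumes hasw: "(g has_vector_derivative w) (at t within Sn)"
    and hasv: "(f has_vector_derivative v) (at (h t) within Sm)"
    and v0: "v \<noteq> 0" and w0: "w \<noteq> 0" and lp: "t islimpt Sn" and tS: "t \<in> Sn"
    and cont: "(h \<longlongrightarrow> h t) (at t within Sn)"
    and hS: "\<forall>y\<in>Sn. h y \<in> Sm" and gf: "\<forall>y\<in>Sn. g y = f (h y)"
    and pos: "\<forall>y\<in>Sn. y \<noteq> t \<longrightarrow> (h y - h t) / (y - t) > 0"
  shows "\<exists>l>0. w = l *\<^sub>R v"
proof -
  define F where "F = at t within Sn"
  have Fnb: "F \<noteq> bot" unfolding F_def using lp by (simp add: trivial_limit_within)
  have ev: "eventually (\<lambda>y. y \<in> Sn \<and> y \<noteq> t) F"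
    unfolding F_def eventually_at_filter by simp
  have q1: "((\<lambda>y. (g y - g t) /\<^sub>R (y - t)) \<longlongrightarrow> w) F"
    using hasw vd_iff F_def by blast
  have q2: "((\<lambda>y. (f y - f (h t)) /\<^sub>R (y - h t)) \<longlongrightarrow> v) (at (h t) within Sm)"
    using hasv vd_iff by blast
  have hne: "h y \<noteq> h t" if "y \<in> Sn" "y \<noteq> t" for y
  proof -
    have "0 < (h y - h t) / (y - t)" using pos that by blast
    then show ?thesis by auto
  qed
  have fl: "filterlim h (at (h t) within Sm) F"
    unfolding filterlim_at
  proof
    show "\<forall>\<^sub>F x in F. h x \<in> Sm \<and> h x \<noteq> h t"
      using ev by eventually_elim (use hS hne in auto)
  qed (use cont F_def in simp)
  define Q where "Q y = (f (h y) - f (h t)) /\<^sub>R (h y - h t)" for y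
  define d where "d y = (h y - h t) / (y - t)" for y
  have q3: "(Q \<longlongrightarrow> v) F"
    unfolding Q_def using filterlim_compose[OF q2 fl] by (simp add: o_def)
  have eq: "eventually (\<lambda>y. (g y - g t) /\<^sub>R (y - t) = d y *\<^sub>R Q y) F"
    using ev
  proof eventually_elim
    case (elim y)
    then have "h y - h t \<noteq> 0" "y - t \<noteq> 0" using hne by auto
    then show ?case using elim gf tS
      by (simp add: d_def Q_def divide_inverse)
  qed
  have q4: "((\<lambda>y. d y *\<^sub>R Q y) \<longlongrightarrow> w) F"
    using Lim_transform_eventually[OF q1 eq] .
  have Qne: "eventually (\<lambda>y. Q y \<noteq> 0) F"
    using tendsto_imp_eventually_ne[OF q3 v0] .
  have eqd: "eventually (\<lambda>y. inner (d y *\<^sub>R Q y) (Q y) / (norm (Q y))\<^sup>2 = d y) F"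
    using Qne
  proof eventually_elim
    case (elim y)
    then show ?case by (simp add: power2_norm_eq_inner)
  qed
  have "((\<lambda>y. inner (d y *\<^sub>R Q y) (Q y) / (norm (Q y))\<^sup>2) \<longlongrightarrow> inner w v / (norm v)\<^sup>2) F"
    using v0 by (intro tendsto_divide[OF tendsto_inner[OF q4 q3] tendsto_power[OF tendsto_norm[OF q3]]]) simp
  then have q5: "(d \<longlongrightarrow> inner w v / (norm v)\<^sup>2) F"
    using Lim_transform_eventually[OF _ eqd] by blast
  define l where "l = inner w v / (norm v)\<^sup>2"
  have "((\<lambda>y. d y *\<^sub>R Q y) \<longlongrightarrow> l *\<^sub>R v) F"
    unfolding l_def by (rule tendsto_scaleR[OF q5 q3])
  then have wl: "w = l *\<^sub>R v" using tendsto_unique[OF Fnb q4] by blast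
  have "eventually (\<lambda>y. 0 \<le> d y) F"
    using ev
  proof eventually_elim
    case (elim y)
    have "0 < d y" using pos elim unfolding d_def by blast
    then show ?case by simp
  qed
  then have "0 \<le> l" unfolding l_def using tendsto_lowerbound[OF q5 _ Fnb] by blast
  moreover have "l \<noteq> 0" using wl w0 by auto
  ultimately have "l > 0" by simp
  then show ?thesis using wl by blast
qed




lemma ck_diff: "lz_curve_Ck (Suc k) S f \<Longrightarrow> t \<in> S \<Longrightarrow> f differentiable (at t within S)"
  by simp

lemma restr_path:
  assumes op: "\<forall>ch\<in>A. open (fst ch)" and cp: "causal_path A G \<mu>"
    and a: "a \<in> fst \<mu>" and c: "c \<in> fst \<mu>" and ac: "a < c"
  shows "causal_path A G ({a..c}, snd \<mu>)"
proof -
  have iv: "is_interval (fst \<mu>)" and cont: "continuous_on (fst \<mu>) (snd \<mu>)"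
    and ck: "\<forall>ch\<in>A. \<forall>k. lz_curve_Ck k {t\<in>fst \<mu>. snd \<mu> t \<in> fst ch} (snd ch \<circ> snd \<mu>)"
    and tg: "\<forall>ch\<in>A. \<forall>t\<in>fst \<mu>. snd \<mu> t \<in> fst ch \<longrightarrow>
        vector_derivative (snd ch \<circ> snd \<mu>) (at t within {s\<in>fst \<mu>. snd \<mu> s \<in> fst ch}) \<noteq> 0 \<and>
        vector_derivative (snd ch \<circ> snd \<mu>) (at t within {s\<in>fst \<mu>. snd \<mu> s \<in> fst ch}) \<bullet>
          (G ch (snd ch (snd \<mu> t)) *v vector_derivative (snd ch \<circ> snd \<mu>) (at t within {s\<in>fst \<mu>. snd \<mu> s \<in> fst ch})) \<le> 0"
    using cp unfolding causal_path_def Let_def by auto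
  have sub: "{a..c} \<subseteq> fst \<mu>"
  proof
    fix x assume "x \<in> {a..c}"
    show "x \<in> fst \<mu>" by (rule mem_is_interval_1_I[OF iv a c]) (use \<open>x \<in> {a..c}\<close> in auto)
  qed
  have cont': "continuous_on {a..c} (snd \<mu>)" using continuous_on_subset[OF cont sub] .
  have lp: "t islimpt {s\<in>{a..c}. snd \<mu> s \<in> fst ch}" if "ch \<in> A" "t \<in> {s\<in>{a..c}. snd \<mu> s \<in> fst ch}" for ch t
    using limpt_preimage[of "{a..c}" a c "snd \<mu>" "fst ch" t] that op ac cont' by auto
  have ssub: "{s\<in>{a..c}. snd \<mu> s \<in> fst ch} \<subseteq> {s\<in>fst \<mu>. snd \<mu> s \<in> fst ch}" for ch
    using sub by auto
  have ck': "lz_curve_Ck k {s\<in>{a..c}. snd \<mu> s \<in> fst ch} (snd ch \<circ> snd \<mu>)" if "ch \<in> A" for ch k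
    using Ck_subset[OF _ ssub] ck lp that by blast
  have vdeq: "vector_derivative (snd ch \<circ> snd \<mu>) (at t within {s\<in>{a..c}. snd \<mu> s \<in> fst ch})
      = vector_derivative (snd ch \<circ> snd \<mu>) (at t within {s\<in>fst \<mu>. snd \<mu> s \<in> fst ch})"
    if "ch \<in> A" "t \<in> {a..c}" "snd \<mu> t \<in> fst ch" for ch t
  proof (rule vd_sub[OF _ ssub])
    have "lz_curve_Ck (Suc 0) {t\<in>fst \<mu>. snd \<mu> t \<in> fst ch} (snd ch \<circ> snd \<mu>)" using ck that(1) by blast
    then show "(snd ch \<circ> snd \<mu>) differentiable (at t within {s\<in>fst \<mu>. snd \<mu> s \<in> fst ch})"
      using that sub by auto
    show "t islimpt {s\<in>{a..c}. snd \<mu> s \<in> fst ch}" using lp that by auto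
  qed
  show ?thesis
    unfolding causal_path_def Let_def fst_conv snd_conv
  proof (intro conjI)
    show "is_interval {a..c}" by (rule is_interval_cc)
    show "\<exists>x\<in>{a..c}. \<exists>y\<in>{a..c}. x < y" using ac by (intro bexI[of _ a] bexI[of _ c]) auto
    show "continuous_on {a..c} (snd \<mu>)" by (rule cont')
    show "\<forall>ch\<in>A. \<forall>k. lz_curve_Ck k {t \<in> {a..c}. snd \<mu> t \<in> fst ch} (snd ch \<circ> snd \<mu>)"
      using ck' by blast
    show "\<forall>ch\<in>A. \<forall>t\<in>{a..c}. snd \<mu> t \<in> fst ch \<longrightarrow>
        vector_derivative (snd ch \<circ> snd \<mu>) (at t within {s \<in> {a..c}. snd \<mu> s \<in> fst ch}) \<noteq> 0 \<and>
        vector_derivative (snd ch \<circ> snd \<mu>) (at t within {s \<in> {a..c}. snd \<mu> s \<in> fst ch}) \<bullet>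
        (G ch (snd ch (snd \<mu> t)) *v vector_derivative (snd ch \<circ> snd \<mu>) (at t within {s \<in> {a..c}. snd \<mu> s \<in> fst ch})) \<le> 0"
    proof (intro ballI impI)
      fix ch t assume h: "ch \<in> A" "t \<in> {a..c}" "snd \<mu> t \<in> fst ch"
      have "t \<in> fst \<mu>" using h sub by auto
      then show "vector_derivative (snd ch \<circ> snd \<mu>) (at t within {s \<in> {a..c}. snd \<mu> s \<in> fst ch}) \<noteq> 0 \<and>
        vector_derivative (snd ch \<circ> snd \<mu>) (at t within {s \<in> {a..c}. snd \<mu> s \<in> fst ch}) \<bullet>
        (G ch (snd ch (snd \<mu> t)) *v vector_derivative (snd ch \<circ> snd \<mu>) (at t within {s \<in> {a..c}. snd \<mu> s \<in> fst ch})) \<le> 0"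
        unfolding vdeq[OF h] using tg h by blast
    qed
  qed
qed




lemma fd_reparam:
  assumes op: "\<forall>ch\<in>A. open (fst ch)" and cpn: "causal_path A G \<nu>" and cpm: "causal_path A G \<mu>"
    and fdm: "future_directed A G T \<mu>"
    and sm: "strict_mono_on (fst \<nu>) h" and hI: "\<forall>t\<in>fst \<nu>. h t \<in> fst \<mu>"
    and eqv: "\<forall>t\<in>fst \<nu>. snd \<nu> t = snd \<mu> (h t)" and hc: "continuous_on (fst \<nu>) h"
  shows "future_directed A G T \<nu>"
  unfolding future_directed_def Let_def
proof (intro ballI impI)
  fix ch t assume ch: "ch \<in> A" and t: "t \<in> fst \<nu>" and tu: "snd \<nu> t \<in> fst ch"
  define Sn where "Sn = {s\<in>fst \<nu>. snd \<nu> s \<in> fst ch}"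
  define Sm where "Sm = {s\<in>fst \<mu>. snd \<mu> s \<in> fst ch}"
  define g where "g = snd ch \<circ> snd \<nu>"
  define f where "f = snd ch \<circ> snd \<mu>"
  define w where "w = vector_derivative g (at t within Sn)"
  define v where "v = vector_derivative f (at (h t) within Sm)"
  have ivn: "is_interval (fst \<nu>)" and abn: "\<exists>a\<in>fst \<nu>. \<exists>b\<in>fst \<nu>. a < b"
    and contn: "continuous_on (fst \<nu>) (snd \<nu>)"
    and ckn: "\<forall>k. lz_curve_Ck k Sn g"
    and tgn: "w \<noteq> 0"
    using cpn ch t tu unfolding causal_path_def Let_def Sn_def g_def w_def by auto
  have htm: "h t \<in> fst \<mu>" using hI t by blast
  have htu: "snd \<mu> (h t) \<in> fst ch" using eqv t tu by auto
  have ckm: "\<forall>k. lz_curve_Ck k Sm f" and tgm: "v \<noteq> 0"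
    using cpm ch htm htu unfolding causal_path_def Let_def Sm_def f_def v_def by auto
  have fdv: "T ch (snd ch (snd \<mu> (h t))) \<bullet> (G ch (snd ch (snd \<mu> (h t))) *v v) < 0"
    using fdm ch htm htu unfolding future_directed_def Let_def Sm_def f_def v_def by auto
  have tS: "t \<in> Sn" using t tu Sn_def by simp
  have htS: "h t \<in> Sm" using htm htu Sm_def by simp
  have hasw: "(g has_vector_derivative w) (at t within Sn)"
    using ckn[rule_format, of "Suc 0"] tS vector_derivative_works unfolding w_def by auto
  have hasv: "(f has_vector_derivative v) (at (h t) within Sm)"
    using ckm[rule_format, of "Suc 0"] htS vector_derivative_works unfolding v_def by auto
  obtain a b where ab: "a \<in> fst \<nu>" "b \<in> fst \<nu>" "a < b" using abn by blast
  have lp: "t islimpt Sn"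
    unfolding Sn_def using limpt_preimage[OF ivn ab contn _ t tu] op ch by blast
  have cont: "(h \<longlongrightarrow> h t) (at t within Sn)"
  proof -
    have "(h \<longlongrightarrow> h t) (at t within fst \<nu>)" using hc t unfolding continuous_on_def by blast
    then show ?thesis by (rule tendsto_within_subset) (auto simp: Sn_def)
  qed
  have hS: "\<forall>y\<in>Sn. h y \<in> Sm" using hI eqv unfolding Sn_def Sm_def by auto
  have gf: "\<forall>y\<in>Sn. g y = f (h y)" using eqv unfolding Sn_def g_def f_def by auto
  have pos: "\<forall>y\<in>Sn. y \<noteq> t \<longrightarrow> (h y - h t) / (y - t) > 0"
  proof (intro ballI impI)
    fix y assume y: "y \<in> Sn" "y \<noteq> t"
    then have yn: "y \<in> fst \<nu>" by (simp add: Sn_def)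
    show "(h y - h t) / (y - t) > 0"
    proof (cases "y < t")
      case True
      then have "h y < h t" using strict_mono_onD[OF sm yn t] by blast
      then show ?thesis using True by (simp add: divide_neg_neg)
    next
      case False
      then have "t < y" using y(2) by simp
      then have "h t < h y" using strict_mono_onD[OF sm t yn] by blast
      then show ?thesis using \<open>t < y\<close> by simp
    qed
  qed
  obtain l where l: "l > 0" "w = l *\<^sub>R v"
    using key[OF hasw hasv tgm tgn lp tS cont hS gf pos] by blast
  have xe: "snd ch (snd \<nu> t) = snd ch (snd \<mu> (h t))" using eqv t by simp
  have "T ch (snd ch (snd \<nu> t)) \<bullet> (G ch (snd ch (snd \<nu> t)) *v w)
      = l * (T ch (snd ch (snd \<mu> (h t))) \<bullet> (G ch (snd ch (snd \<mu> (h t))) *v v))"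
    unfolding xe l(2) by (simp add: matrix_vector_mult_scaleR)
  also have "\<dots> < 0" using l(1) fdv by (simp add: mult_pos_neg)
  finally show "T ch (snd ch (snd \<nu> t)) \<bullet>
       (G ch (snd ch (snd \<nu> t)) *v vector_derivative (snd ch \<circ> snd \<nu>) (at t within {s \<in> fst \<nu>. snd \<nu> s \<in> fst ch})) < 0"
    unfolding w_def g_def Sn_def .
qed

lemma restr_class:
  assumes op: "\<forall>ch\<in>A. open (fst ch)" and cp: "causal_path A G \<mu>" and fd: "future_directed A G T \<mu>"
    and a: "a \<in> fst \<mu>" and c: "c \<in> fst \<mu>" and ac: "a < c"
  shows "fd_causal_curve A G T {\<nu>. causal_path A G \<nu> \<and> reparam \<nu> ({a..c}, snd \<mu>)}"
    and "({a..c}, snd \<mu>) \<in> {\<nu>. causal_path A G \<nu> \<and> reparam \<nu> ({a..c}, snd \<mu>)}"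
proof -
  have cpr: "causal_path A G ({a..c}, snd \<mu>)" by (rule restr_path[OF op cp a c ac])
  have "reparam ({a..c}, snd \<mu>) ({a..c}, snd \<mu>)"
    unfolding reparam_def by (intro exI[of _ id]) (auto simp: strict_mono_on_def)
  then show mem: "({a..c}, snd \<mu>) \<in> {\<nu>. causal_path A G \<nu> \<and> reparam \<nu> ({a..c}, snd \<mu>)}"
    using cpr by simp
  have iv: "is_interval (fst \<mu>)" using cp unfolding causal_path_def by blast
  have sub: "{a..c} \<subseteq> fst \<mu>"
  proof
    fix x assume "x \<in> {a..c}"
    show "x \<in> fst \<mu>" by (rule mem_is_interval_1_I[OF iv a c]) (use \<open>x \<in> {a..c}\<close> in auto)
  qed
  show "fd_causal_curve A G T {\<nu>. causal_path A G \<nu> \<and> reparam \<nu> ({a..c}, snd \<mu>)}"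
    unfolding fd_causal_curve_def causal_curve_def
  proof (intro conjI exI[of _ "({a..c}, snd \<mu>)"] refl ballI cpr)
    fix \<nu> assume "\<nu> \<in> {\<nu>. causal_path A G \<nu> \<and> reparam \<nu> ({a..c}, snd \<mu>)}"
    then have cpn: "causal_path A G \<nu>" and rp: "reparam \<nu> ({a..c}, snd \<mu>)" by auto
    obtain h where h: "bij_betw h (fst \<nu>) {a..c}" "strict_mono_on (fst \<nu>) h"
      "\<forall>t\<in>fst \<nu>. snd \<nu> t = snd \<mu> (h t)"
      using rp unfolding reparam_def by auto
    have im: "h ` fst \<nu> = {a..c}" using h(1) bij_betw_imp_surj_on by blast
    have hc: "continuous_on (fst \<nu>) h" using sm_cont[OF h(2) im is_interval_cc] .
    have hI: "\<forall>t\<in>fst \<nu>. h t \<in> fst \<mu>" using im sub by blast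
    show "future_directed A G T \<nu>" by (rule fd_reparam[OF op cpn cp fd h(2) hI h(3) hc])
  qed
qed




lemma through_sub: "curves_through A G T Z X \<subseteq> curves_through A G T Z Z"
  unfolding curves_through_def passes_then_def by blast

lemma rep_incl:
  assumes "join_representable A G T X Y"
  shows "\<exists>W. slice A G T W \<and> (\<forall>Z. slice A G T Z \<longrightarrow>
    curves_through A G T Z X \<union> curves_through A G T Z Y \<subseteq> curves_through A G T Z W)"
proof -
  obtain W \<alpha> where W: "slice A G T W"
    and bij: "\<forall>Z. slice A G T Z \<longrightarrow> bij_betw (\<alpha> Z) (slice_hom A G T Z W) (join_obj A G T X Y Z)"
    and nat: "\<forall>Z Z' U S. slice A G T Z \<longrightarrow> slice A G T Z' \<longrightarrow>
            U \<in> slice_hom A G T Z' Z \<longrightarrow> S \<in> slice_hom A G T Z W \<longrightarrow>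
            \<alpha> Z' (slice_comp S U) = join_arr U (\<alpha> Z S)"
    using assms unfolding join_representable_def by blast
  show ?thesis
  proof (intro exI[of _ W] conjI W allI impI subsetI)
    fix Z c assume Z: "slice A G T Z" and c: "c \<in> curves_through A G T Z X \<union> curves_through A G T Z Y"
    have "{c} \<in> join_obj A G T X Y Z" using c unfolding join_obj_def by simp
    moreover have "\<alpha> Z ` slice_hom A G T Z W = join_obj A G T X Y Z"
      using bij Z bij_betw_imp_surj_on by blast
    ultimately have "{c} \<in> \<alpha> Z ` slice_hom A G T Z W" by simp
    then obtain S where S: "S \<in> slice_hom A G T Z W" "\<alpha> Z S = {c}"
      by (metis imageE)
    have cZ: "c \<in> curves_through A G T Z Z" using c through_sub by blast
    have "{c} \<in> slice_hom A G T Z Z" using cZ unfolding slice_hom_def by simp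
    then have e1: "\<alpha> Z (S \<inter> {c}) = {c}"
      using nat[rule_format, OF Z Z _ S(1), of "{c}"] S(2) unfolding slice_comp_def join_arr_def by simp
    have "{} \<in> slice_hom A G T Z Z" unfolding slice_hom_def by simp
    then have e2: "\<alpha> Z (S \<inter> {}) = {}"
      using nat[rule_format, OF Z Z _ S(1), of "{}"] unfolding slice_comp_def join_arr_def by simp
    have "c \<in> S"
    proof (rule ccontr)
      assume "c \<notin> S"
      then have "S \<inter> {c} = S \<inter> {}" by auto
      then show False using e1 e2 by simp
    qed
    then show "c \<in> curves_through A G T Z W" using S(1) unfolding slice_hom_def by blast
  qed
qed

lemma core:
  assumes op: "\<forall>ch\<in>A. open (fst ch)" and sX: "slice A G T X" and sY: "slice A G T Y"
    and rep: "join_representable A G T X Y"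
    and xX: "x \<in> X" and yY: "y \<in> Y" and xY: "x \<notin> Y" and pr: "causal_prec A G T x y" and xy: "x \<noteq> y"
  shows False
proof -
  obtain W where W: "slice A G T W" and incl: "\<And>Z. slice A G T Z \<Longrightarrow>
    curves_through A G T Z X \<union> curves_through A G T Z Y \<subseteq> curves_through A G T Z W"
    using rep_incl[OF rep] by blast
  obtain C \<mu> a b where C: "fd_causal_curve A G T C" and mu: "\<mu> \<in> C" and ab: "a \<in> fst \<mu>" "b \<in> fst \<mu>" "a \<le> b"
    and fa: "snd \<mu> a = x" and fb: "snd \<mu> b = y"
    using pr xy unfolding causal_prec_def by blast
  have cp: "causal_path A G \<mu>" using C mu unfolding fd_causal_curve_def causal_curve_def by blast
  have fd: "future_directed A G T \<mu>" using C mu unfolding fd_causal_curve_def by blast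
  define f where "f = snd \<mu>"
  have iv: "is_interval (fst \<mu>)" and cont: "continuous_on (fst \<mu>) f"
    using cp unfolding causal_path_def f_def by auto
  have sub: "{a..b} \<subseteq> fst \<mu>"
  proof
    fix z assume "z \<in> {a..b}"
    show "z \<in> fst \<mu>" by (rule mem_is_interval_1_I[OF iv ab(1,2)]) (use \<open>z \<in> {a..b}\<close> in auto)
  qed
  define K where "K = {a..b} \<inter> f -` Y"
  have clY: "closed Y" using sY unfolding slice_def by blast
  have clK: "closed K" unfolding K_def
    by (rule continuous_closed_preimage[OF continuous_on_subset[OF cont sub] closed_atLeastAtMost clY])
  have bK: "b \<in> K" using ab fb yY unfolding K_def f_def by auto
  have bdd: "bdd_below K" unfolding K_def by (rule bdd_belowI[of _ a]) auto
  define b' where "b' = Inf K"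
  have b'K: "b' \<in> K" unfolding b'_def using closed_contains_Inf[OF _ bdd clK] bK by blast
  have low: "b' \<le> s" if "s \<in> K" for s unfolding b'_def using cInf_lower[OF that bdd] .
  have b'ab: "a \<le> b'" "b' \<le> b" "f b' \<in> Y" using b'K unfolding K_def by auto
  have "b' \<noteq> a" using b'ab(3) fa xY unfolding f_def by auto
  then have ab': "a < b'" using b'ab by simp
  have noY: "f s \<notin> Y" if "a \<le> s" "s < b'" for s
  proof
    assume "f s \<in> Y"
    then have "s \<in> K" unfolding K_def using that b'ab by auto
    then show False using low that by fastforce
  qed
  have b'm: "b' \<in> fst \<mu>" using sub b'ab by auto
  define c where "c = (a + b') / 2"
  have cc: "a < c" "c < b'" using ab' unfolding c_def by auto
  have cm: "c \<in> fst \<mu>" using sub cc b'ab by auto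
  define D1 where "D1 = {\<nu>. causal_path A G \<nu> \<and> reparam \<nu> ({a..c}, snd \<mu>)}"
  define D2 where "D2 = {\<nu>. causal_path A G \<nu> \<and> reparam \<nu> ({a..b'}, snd \<mu>)}"
  have D1: "fd_causal_curve A G T D1" "({a..c}, snd \<mu>) \<in> D1"
    unfolding D1_def using restr_class[OF op cp fd ab(1) cm cc(1)] by auto
  have D2: "fd_causal_curve A G T D2" "({a..b'}, snd \<mu>) \<in> D2"
    unfolding D2_def using restr_class[OF op cp fd ab(1) b'm ab'] by auto
  have "passes_then ({a..c}, snd \<mu>) X X"
    unfolding passes_then_def using cc fa xX by auto
  then have "D1 \<in> curves_through A G T X X" unfolding curves_through_def using D1 by blast
  then have "D1 \<in> curves_through A G T X W" using incl[OF sX] by blast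
  then obtain \<nu> where nu: "\<nu> \<in> D1" "passes_then \<nu> X W" unfolding curves_through_def by blast
  obtain q where q: "q \<in> fst \<nu>" "snd \<nu> q \<in> W" using nu(2) unfolding passes_then_def by blast
  obtain h1 where h1: "bij_betw h1 (fst \<nu>) {a..c}" "\<forall>t\<in>fst \<nu>. snd \<nu> t = snd \<mu> (h1 t)"
    using nu(1) unfolding D1_def reparam_def by auto
  define t where "t = h1 q"
  have t: "t \<in> {a..c}" "f t \<in> W" using h1 q unfolding t_def f_def bij_betw_def by auto
  have "passes_then ({a..b'}, snd \<mu>) Y Y"
    unfolding passes_then_def using ab' b'ab f_def by auto
  then have "D2 \<in> curves_through A G T Y Y" unfolding curves_through_def using D2 by blast
  then have "D2 \<in> curves_through A G T Y W" using incl[OF sY] by blast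
  then obtain \<nu>2 where nu2: "\<nu>2 \<in> D2" "passes_then \<nu>2 Y W" unfolding curves_through_def by blast
  obtain h2 where h2: "bij_betw h2 (fst \<nu>2) {a..b'}" "strict_mono_on (fst \<nu>2) h2"
     "\<forall>t\<in>fst \<nu>2. snd \<nu>2 t = snd \<mu> (h2 t)"
    using nu2(1) unfolding D2_def reparam_def by auto
  have "t \<in> {a..b'}" using t cc by auto
  then obtain q2 where q2: "q2 \<in> fst \<nu>2" "h2 q2 = t"
    using h2(1) unfolding bij_betw_def by (metis imageE)
  have "snd \<nu>2 q2 \<in> W" using h2(3) q2 t unfolding f_def by auto
  then obtain p where p: "p \<in> fst \<nu>2" "p \<le> q2" "snd \<nu>2 p \<in> Y"
    using nu2(2) q2(1) unfolding passes_then_def by blast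
  have "h2 p \<le> t" using sm_le[OF h2(2) p(1) q2(1) p(2)] q2(2) by simp
  moreover have "h2 p \<in> {a..b'}" using h2(1) p(1) unfolding bij_betw_def by auto
  moreover have "f (h2 p) \<in> Y" using h2(3) p unfolding f_def by auto
  ultimately show False using noY t cc by fastforce
qed

theorem mainTheorem14:
  fixes A :: "('a::{t2_space, second_countable_topology}, 'n::finite) chart set"
    and G :: "('a, 'n) chart \<Rightarrow> real^'n \<Rightarrow> real^'n^'n"
    and T :: "('a, 'n) chart \<Rightarrow> real^'n \<Rightarrow> real^'n"
    and X Y :: "'a set"
  assumes "time_oriented_lorentzian A G T"
    and "slice A G T X" and "slice A G T Y"
    and "\<not> spacelike A G T (X \<union> Y)"
  shows "\<not> join_representable A G T X Y"
proof
  assume rep: "join_representable A G T X Y"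
  have op: "\<forall>ch\<in>A. open (fst ch)"
    using assms(1) unfolding time_oriented_lorentzian_def smooth_atlas_def by fastforce
  have rep': "join_representable A G T Y X"
    using rep unfolding join_representable_def join_obj_def by (simp add: Un_commute)
  obtain x y where xy: "x \<in> X \<union> Y" "y \<in> X \<union> Y" "x \<noteq> y" "causal_prec A G T x y"
    using assms(4) unfolding spacelike_def by blast
  have spX: "spacelike A G T X" and spY: "spacelike A G T Y"
    using assms(2,3) unfolding slice_def by auto
  show False
  proof (cases "x \<in> X")
    case True
    then have "y \<notin> X" using spX xy unfolding spacelike_def by blast
    then have "y \<in> Y" using xy by blast
    then have "x \<notin> Y" using spY xy unfolding spacelike_def by blast
    show False by (rule core[OF op assms(2,3) rep True \<open>y \<in> Y\<close> \<open>x \<notin> Y\<close> xy(4,3)])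
  next
    case False
    then have "x \<in> Y" using xy by blast
    then have "y \<notin> Y" using spY xy unfolding spacelike_def by blast
    then have "y \<in> X" using xy by blast
    show False by (rule core[OF op assms(3,2) rep' \<open>x \<in> Y\<close> \<open>y \<in> X\<close> False xy(4,3)])
  qed
qed


end
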